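(* Let $X$ be an infinite dimensional normed space over $\mathbb{K}=\mathbb{R}$ or $\mathbb{C}$. If $(x_n)_{n=1}^\infty$ is a linearly independent sequence in $X$ such that $\inf_{n\in\mathbb{N}}\|x_n\|_X>0$, then for any infinite dimensional subspace $\mathcal{S}$ of $\ell_\infty$ properly containing $c_0$, there is no subset of $X$ that is $[(x_n)_{n=1}^\infty,\mathcal{S}]$-lineable.
   Context: $\ell_\infty$ is the space of bounded scalar sequences and $c_0$ the space of scalar sequences converging to $0$, both viewed as subspaces of $\mathbb{K}^{\mathbb{N}}$. For a subspace $\mathcal{S}$ of $\mathbb{K}^{\mathbb{N}}$ and a sequence $(x_n)$ in $X$, a subset $A\subset X$ is $[(x_n)_{n=1}^\infty,\mathcal{S}]$-lineable if for each $(c_n)_{n=1}^\infty\in\mathcal{S}$ the series $\sum_{n=1}^\infty c_nx_n$ converges in $X$ to a vector of $A\cup\{0\}$. *)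

theory Defs
  imports "HOL-Analysis.Analysis" "HOL-Library.Function_Algebras"
begin

text \<open>Scalar sequences (elements of K^N), indexed by nat (index 0 plays the role of 1).\<close>

definition ell_infty :: "(nat \<Rightarrow> 'k::real_normed_field) set" where
  "ell_infty = {c. bounded (range c)}"

definition c_zero :: "(nat \<Rightarrow> 'k::real_normed_field) set" where
  "c_zero = {c. c \<longlonglongrightarrow> 0}"

definition seq_subspace :: "(nat \<Rightarrow> 'k::field) set \<Rightarrow> bool" where
  "seq_subspace S \<longleftrightarrow> (\<lambda>n. 0) \<in> S \<and> (\<forall>f\<in>S. \<forall>g\<in>S. (\<lambda>n. f n + g n) \<in> S)
     \<and> (\<forall>a. \<forall>f\<in>S. (\<lambda>n. a * f n) \<in> S)"

definition lin_indep_fam :: "('k::field \<Rightarrow> 'x::ab_group_add \<Rightarrow> 'x) \<Rightarrow> nat \<Rightarrow> (nat \<Rightarrow> 'x) \<Rightarrow> bool" where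
  "lin_indep_fam smul m v \<longleftrightarrow>
     (\<forall>a. (\<Sum>i<m. smul (a i) (v i)) = 0 \<longrightarrow> (\<forall>i<m. a i = 0))"

definition infinite_dim_seqs :: "(nat \<Rightarrow> 'k::field) set \<Rightarrow> bool" where
  "infinite_dim_seqs S \<longleftrightarrow>
     (\<forall>m. \<exists>v. (\<forall>i<m. v i \<in> S) \<and> lin_indep_fam (\<lambda>a f n. a * f n) m v)"

definition infinite_dim_space :: "('k::field \<Rightarrow> 'x::ab_group_add \<Rightarrow> 'x) \<Rightarrow> bool" where
  "infinite_dim_space smul \<longleftrightarrow> (\<forall>m. \<exists>v. lin_indep_fam smul m v)"

text \<open>A sequence is linearly independent: every finite initial segment is
  (equivalently every finite subfamily is).\<close>
definition lin_indep_seq :: "('k::field \<Rightarrow> 'x::ab_group_add \<Rightarrow> 'x) \<Rightarrow> (nat \<Rightarrow> 'x) \<Rightarrow> bool" where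
  "lin_indep_seq smul x \<longleftrightarrow> (\<forall>m. lin_indep_fam smul m x)"

text \<open>smul makes the real normed vector space 'x a normed space over the normed field 'k
  (compatible with the real structure).\<close>
definition normed_space_over :: "('k::real_normed_field \<Rightarrow> 'x::real_normed_vector \<Rightarrow> 'x) \<Rightarrow> bool" where
  "normed_space_over smul \<longleftrightarrow>
     (\<forall>a x y. smul a (x + y) = smul a x + smul a y) \<and>
     (\<forall>a b x. smul (a + b) x = smul a x + smul b x) \<and>
     (\<forall>a b x. smul (a * b) x = smul a (smul b x)) \<and>
     (\<forall>x. smul 1 x = x) \<and>
     (\<forall>r x. smul (of_real r) x = scaleR r x) \<and>
     (\<forall>a x. norm (smul a x) = norm a * norm x)"

definition seq_lineable ::
  "('k \<Rightarrow> 'x::real_normed_vector \<Rightarrow> 'x) \<Rightarrow> 'x set \<Rightarrow> (nat \<Rightarrow> 'x) \<Rightarrow> (nat \<Rightarrow> 'k) set \<Rightarrow> bool" where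
  "seq_lineable smul A x S \<longleftrightarrow>
     (\<forall>c\<in>S. \<exists>y\<in>A \<union> {0}. (\<lambda>n. smul (c n) (x n)) sums y)"

end

theory Submission
  imports Defs
begin

lemma key:
  fixes c :: "nat \<Rightarrow> 'k::real_normed_field" and t :: "nat \<Rightarrow> 'x::real_normed_vector"
  assumes d: "d > 0" and b: "\<And>n. norm (c n) * d \<le> norm (t n)" and s: "summable t"
  shows "c \<longlonglongrightarrow> 0"
proof -
  have t0: "t \<longlonglongrightarrow> 0" using s summable_LIMSEQ_zero by blast
  have g: "(\<lambda>n. norm (t n) / d) \<longlonglongrightarrow> 0"
    using tendsto_divide[OF tendsto_norm_zero[OF t0] tendsto_const[of d]] d by simp
  show ?thesis
  proof (rule Lim_null_comparison[OF _ g])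
    show "\<forall>\<^sub>F n in sequentially. norm (c n) \<le> norm (t n) / d"
      using b d by (simp add: pos_le_divide_eq)
  qed
qed

lemma infpos:
  fixes x :: "nat \<Rightarrow> 'b::real_normed_vector"
  assumes "(INF n. norm (x n)) > 0"
  shows "norm (x n) \<ge> (INF n. norm (x n))"
  by (rule cINF_lower) (auto intro: bdd_belowI[of _ 0])

lemma gen:
  fixes smul :: "'k::real_normed_field \<Rightarrow> 'b::real_normed_vector \<Rightarrow> 'b"
  assumes nrm: "\<And>a v. norm (smul a v) = norm a * norm v"
    and inf: "(INF n. norm (x n)) > 0" and sub: "c_zero \<subset> S"
  shows "\<not> (\<exists>A. seq_lineable smul A x S)"
proof
  assume "\<exists>A. seq_lineable smul A x S"
  then obtain A where L: "seq_lineable smul A x S" by blast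
  obtain c where cS: "c \<in> S" and cn: "c \<notin> c_zero" using sub by blast
  obtain y where "(\<lambda>n. smul (c n) (x n)) sums y" using L cS unfolding seq_lineable_def by blast
  hence s: "summable (\<lambda>n. smul (c n) (x n))" by (auto simp: summable_def)
  define d where "d = (INF n. norm (x n))"
  have "c \<longlonglongrightarrow> 0"
  proof (rule key[OF _ _ s])
    show "d > 0" using inf d_def by simp
    fix n
    have "norm (x n) \<ge> d" using infpos[OF inf] d_def by simp
    thus "norm (c n) * d \<le> norm (smul (c n) (x n))"
      by (simp add: nrm mult_left_mono)
  qed
  thus False using cn unfolding c_zero_def by simp
qed

theorem mainTheorem3:
  shows
   "(\<forall>(x :: nat \<Rightarrow> 'a::real_normed_vector) (S :: (nat \<Rightarrow> real) set).
       infinite_dim_space (scaleR :: real \<Rightarrow> 'a \<Rightarrow> 'a) \<and>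
       lin_indep_seq scaleR x \<and> (INF n. norm (x n)) > 0 \<and>
       seq_subspace S \<and> infinite_dim_seqs S \<and> S \<subseteq> ell_infty \<and> c_zero \<subset> S
       \<longrightarrow> \<not> (\<exists>A. seq_lineable scaleR A x S))
  \<and> (\<forall>(smul :: complex \<Rightarrow> 'b::real_normed_vector \<Rightarrow> 'b) (x :: nat \<Rightarrow> 'b)
       (S :: (nat \<Rightarrow> complex) set).
       normed_space_over smul \<and> infinite_dim_space smul \<and>
       lin_indep_seq smul x \<and> (INF n. norm (x n)) > 0 \<and>
       seq_subspace S \<and> infinite_dim_seqs S \<and> S \<subseteq> ell_infty \<and> c_zero \<subset> S
       \<longrightarrow> \<not> (\<exists>A. seq_lineable smul A x S))"
proof (intro conjI allI impI)
  fix x :: "nat \<Rightarrow> 'a" and S :: "(nat \<Rightarrow> real) set"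
  assume h: "infinite_dim_space (scaleR :: real \<Rightarrow> 'a \<Rightarrow> 'a) \<and>
       lin_indep_seq scaleR x \<and> (INF n. norm (x n)) > 0 \<and>
       seq_subspace S \<and> infinite_dim_seqs S \<and> S \<subseteq> ell_infty \<and> c_zero \<subset> S"
  show "\<not> (\<exists>A. seq_lineable scaleR A x S)"
    by (rule gen[where smul=scaleR]) (use h in auto)
next
  fix smul :: "complex \<Rightarrow> 'b \<Rightarrow> 'b" and x :: "nat \<Rightarrow> 'b" and S :: "(nat \<Rightarrow> complex) set"
  assume h: "normed_space_over smul \<and> infinite_dim_space smul \<and>
       lin_indep_seq smul x \<and> (INF n. norm (x n)) > 0 \<and>
       seq_subspace S \<and> infinite_dim_seqs S \<and> S \<subseteq> ell_infty \<and> c_zero \<subset> S"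
  show "\<not> (\<exists>A. seq_lineable smul A x S)"
    by (rule gen[where smul=smul]) (use h in \<open>auto simp: normed_space_over_def\<close>)
qed

end
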